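(* Suppose there exist real numbers $0<\alpha<\frac{1}{2}$ and $\delta>0$ such that $$\sum_{1\le j\le m^{\alpha}}\left\{\pi\!\left(\frac{m+m^{\alpha}}{j}\right)-\pi\!\left(\frac{m}{j}\right)\right\}\ge \delta m^{\alpha}$$ holds for all sufficiently large $m$ (the sum over positive integers $j$). Then, with $$\gamma=\max\!\left(\alpha,\ \frac{1-\delta(1-\alpha)}{2-\delta}\right),$$ we have $\gamma<\frac{1}{2}$ and $g_1(n)<n^{\gamma}$ for all sufficiently large integers $n$.
   Context: $\pi(x)$ is the number of primes $\le x$. For an integer $\nu>1$, $\omega(\nu)$ is the number of distinct prime divisors of $\nu$, and $\omega(1)=0$. $g_1(n)$ is the largest positive integer $k$ such that $\omega\big(\prod_{i=1}^{l}(n+i)\big)\ge l$ for all $1\le l\le k$. *)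

theory Defs
  imports "HOL-Analysis.Analysis" "HOL-Computational_Algebra.Primes"
begin

definition prime_pi :: "real \<Rightarrow> nat" where
  "prime_pi x = card {p :: nat. prime p \<and> real p \<le> x}"

definition omega :: "nat \<Rightarrow> nat" where
  "omega v = card (prime_factors v)"

definition g1 :: "nat \<Rightarrow> nat" where
  "g1 n = (GREATEST k. k \<ge> 1 \<and> (\<forall>l\<in>{1..k}. omega (\<Prod>i=1..l. n + i) \<ge> l))"

end

theory Submission
  imports Defs "HOL-Real_Asymp.Real_Asymp"
begin



lemma prod_primes_dvd:
  fixes S :: "nat set"
  assumes "finite S" "\<forall>p\<in>S. prime p \<and> p dvd x"
  shows "\<Prod>S dvd x"
  using assms
proof (induction S rule: finite_induct)
  case empty then show ?case by simp
next
  case (insert p S)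
  have cop: "coprime p (\<Prod>S)"
  proof -
    have "\<not> p dvd \<Prod>S"
    proof
      assume "p dvd \<Prod>S"
      then obtain q where "q \<in> S" "p dvd q"
        using insert by (metis prime_dvd_prod_iff insert_iff)
      then show False using insert
        by (metis insert_iff primes_dvd_imp_eq)
    qed
    then show ?thesis using insert by (simp add: prime_imp_coprime)
  qed
  have "\<Prod>S dvd x" using insert by auto
  moreover have "p dvd x" using insert by auto
  ultimately show ?case using insert cop by (simp add: divides_mult)
qed

lemma choose_odd_le: "(2*m+1 choose m) \<le> 4^m"
proof -
  have sym: "(2*m+1 choose m) = (2*m+1 choose (m+1))"
    using binomial_symmetric[of m "2*m+1"] by simp
  have "(2*m+1 choose m) + (2*m+1 choose (m+1)) = (\<Sum>k\<in>{m,m+1}. (2*m+1) choose k)" by simp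
  also have "\<dots> \<le> (\<Sum>k\<le>2*m+1. (2*m+1) choose k)"
    by (rule sum_mono2) auto
  also have "\<dots> = 2^(2*m+1)" by (rule choose_row_sum)
  finally have "2 * (2*m+1 choose m) \<le> 2 * 4^m" using sym by (simp add: power_mult power_add)
  then show ?thesis by simp
qed

definition primorial :: "nat \<Rightarrow> nat" where
  "primorial n = \<Prod>{p. prime p \<and> p \<le> n}"

lemma primorial_le: "primorial n \<le> 4^n"
proof (induction n rule: less_induct)
  case (less n)
  show ?case
  proof (cases "n \<le> 2")
    case True
    show ?thesis
    proof (cases "n = 0")
      case True
      then have e: "{p. prime p \<and> p \<le> n} = {}" by auto
      have "primorial n = 1" unfolding primorial_def e by simp
      then show ?thesis by simp
    next
      case n0: False
      have e1: "{p. prime p \<and> p \<le> n} \<subseteq> {2}"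
        using True by (auto dest: prime_gt_1_nat simp: le_Suc_eq)
      have "primorial n \<le> \<Prod>{2::nat}"
        unfolding primorial_def by (rule dvd_imp_le[OF prod_dvd_prod_subset[OF _ e1]]) auto
      also have "(4::nat) \<le> 4^n" using n0 power_increasing[of 1 n "4::nat"] by simp
      then have "\<Prod>{2::nat} \<le> 4^n" by simp
      finally show ?thesis .
    qed
  next
    case False
    show ?thesis
    proof (cases "even n")
      case True
      have np: "\<not> prime n" using prime_odd_nat[of n] True False by auto
      have "{p. prime p \<and> p \<le> n} = {p. prime p \<and> p \<le> n - 1}"
      proof (intro Collect_cong)
        fix p show "prime p \<and> p \<le> n \<longleftrightarrow> prime p \<and> p \<le> n - 1"
          using np False by (cases "p = n") auto
      qed
      then have "primorial n = primorial (n-1)" by (simp add: primorial_def)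
      also have "\<dots> \<le> 4^(n-1)" using less False by simp
      also have "\<dots> \<le> 4^n" by (rule power_increasing) auto
      finally show ?thesis .
    next
      case odd: False
      then obtain m where n: "n = 2*m+1" by (metis oddE)
      have m1: "m \<ge> 1" using n \<open>\<not> n \<le> 2\<close> by simp
      let ?A = "{p. prime p \<and> p \<le> m+1}"
      let ?B = "{p. prime p \<and> m+1 < p \<and> p \<le> n}"
      have finA: "finite ?A" by simp
      have finB: "finite ?B" by (rule finite_subset[of _ "{..n}"]) auto
      have split: "{p. prime p \<and> p \<le> n} = ?A \<union> ?B" using n by auto
      have disj: "?A \<inter> ?B = {}" by auto
      have "primorial n = \<Prod>?A * \<Prod>?B"
        unfolding primorial_def split by (rule prod.union_disjoint[OF finA finB disj])
      also have "\<Prod>?B \<le> (2*m+1 choose m)"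
      proof -
        have "\<Prod>?B dvd (2*m+1 choose m)"
        proof (rule prod_primes_dvd[OF finB], safe)
          fix p assume p: "prime p" "m+1 < p" "p \<le> n"
          have "p \<le> 2*m+1" using p n by simp
          then have "p dvd fact (2*m+1)" using prime_dvd_fact_iff[OF p(1)] by blast
          moreover have "fact m * fact (m+1) * (2*m+1 choose m) = (fact (2*m+1) :: nat)"
            using binomial_fact_lemma[of m "2*m+1"] by (simp add: mult_2)
          moreover have "\<not> p dvd fact m * fact (m+1)"
            using p prime_dvd_fact_iff[OF p(1), of m] prime_dvd_fact_iff[OF p(1), of "m+1"]
              prime_dvd_mult_iff[OF p(1), of "fact m" "fact (m+1)"] by linarith
          ultimately show "p dvd (2*m+1 choose m)"
            by (metis p(1) prime_dvd_mult_iff)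
        qed
        moreover have "(2*m+1 choose m) > 0" by simp
        ultimately show ?thesis by (rule dvd_imp_le)
      qed
      then have "\<Prod>?A * \<Prod>?B \<le> \<Prod>?A * (2*m+1 choose m)" by simp
      also have "\<Prod>?A \<le> 4^(m+1)"
        using less[of "m+1"] n m1 by (simp add: primorial_def)
      then have "\<Prod>?A * (2*m+1 choose m) \<le> 4^(m+1) * 4^m"
        using choose_odd_le by (intro mult_mono) auto
      also have "\<dots> = 4^n" using n by (simp add: power_add[symmetric])
      finally show ?thesis .
    qed
  qed
qed

lemma cheb_pi:
  assumes N: "N \<ge> (2::nat)"
  shows "real (card {p. prime p \<and> p \<le> N}) \<le> 6 * real N / ln (real N)"
proof -
  define S where "S = {p. prime p \<and> p \<le> N}"
  define S1 where "S1 = {p\<in>S. real p \<le> sqrt N}"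
  define S2 where "S2 = {p\<in>S. sqrt N < real p}"
  have finS: "finite S" unfolding S_def by simp
  have fin1: "finite S1" "finite S2" using finS unfolding S1_def S2_def by auto
  have cardS: "card S = card S1 + card S2"
  proof -
    have "S = S1 \<union> S2" "S1 \<inter> S2 = {}" unfolding S1_def S2_def by auto
    then show ?thesis using fin1 card_Un_disjoint by metis
  qed
  have lnN: "ln (real N) > 0" using N by simp
  have sq: "ln (real N) \<le> 2 * sqrt N"
  proof -
    have "ln (sqrt (real N)) \<le> sqrt N - 1" using N by (intro ln_le_minus_one) simp
    moreover have "ln (sqrt (real N)) = ln (real N) / 2" using N by (simp add: ln_sqrt)
    ultimately show ?thesis by simp
  qed
  have c1: "real (card S1) \<le> sqrt N"
  proof -
    have "S1 \<subseteq> {1..nat \<lfloor>sqrt N\<rfloor>}"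
    proof
      fix p assume "p \<in> S1"
      then have "prime p" "real p \<le> sqrt N" unfolding S1_def S_def by auto
      then have "p \<ge> 1" "p \<le> nat \<lfloor>sqrt N\<rfloor>"
        using prime_gt_0_nat[of p] le_nat_floor[of p "sqrt N"] by auto
      then show "p \<in> {1..nat \<lfloor>sqrt N\<rfloor>}" by simp
    qed
    then have "card S1 \<le> card {1..nat \<lfloor>sqrt N\<rfloor>}" by (intro card_mono) auto
    then have "card S1 \<le> nat \<lfloor>sqrt N\<rfloor>" by simp
    then have "real (card S1) \<le> real (nat \<lfloor>sqrt N\<rfloor>)" by linarith
    also have "\<dots> = of_int \<lfloor>sqrt N\<rfloor>" by (simp add: of_nat_nat)
    also have "\<dots> \<le> sqrt N" by simp
    finally show ?thesis .
  qed
  have c1': "real (card S1) \<le> 2 * real N / ln (real N)"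
  proof -
    have "sqrt N * ln N \<le> sqrt N * (2 * sqrt N)" using sq by (intro mult_left_mono) auto
    also have "\<dots> = 2 * N" by simp
    finally have "sqrt N \<le> 2 * N / ln N" using lnN by (simp add: field_simps)
    then show ?thesis using c1 by linarith
  qed
  have c2: "real (card S2) * (ln (real N) / 2) \<le> real N * ln 4"
  proof -
    have "sqrt N ^ card S2 = (\<Prod>p\<in>S2. sqrt (real N))" by simp
    also have "\<dots> \<le> (\<Prod>p\<in>S2. real p)"
      by (intro prod_mono) (auto simp: S2_def)
    also have "\<dots> = real (\<Prod>S2)" by simp
    also have "\<Prod>S2 \<le> \<Prod>S"
      by (rule dvd_imp_le[OF prod_dvd_prod_subset[OF finS]]) (auto simp: S2_def S_def prime_gt_0_nat)
    then have "real (\<Prod>S2) \<le> real (\<Prod>S)" by (simp only: of_nat_le_iff)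
    also have "\<Prod>S = primorial N" by (simp add: S_def primorial_def)
    also have "real (primorial N) \<le> 4 ^ N"
      using primorial_le[of N] by (metis of_nat_le_iff of_nat_numeral of_nat_power)
    finally have *: "sqrt N ^ card S2 \<le> 4 ^ N" .
    have "ln (sqrt N ^ card S2) \<le> ln (4 ^ N)"
      using * N by (subst ln_le_cancel_iff) auto
    then show ?thesis using N by (simp add: ln_realpow ln_sqrt)
  qed
  have l4: "ln (4::real) \<le> 2"
  proof -
    have "ln (4::real) = 2 * ln 2" using ln_mult[of 2 2] by simp
    then show ?thesis using ln_2_less_1 by simp
  qed
  have c2': "real (card S2) \<le> 4 * real N / ln (real N)"
  proof -
    have "real (card S2) * ln (real N) \<le> 2 * real N * ln 4" using c2 by simp
    also have "\<dots> \<le> 2 * real N * 2" using l4 by (intro mult_left_mono) auto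
    finally show ?thesis using lnN by (simp add: field_simps)
  qed
  show ?thesis using cardS c1' c2' unfolding S_def[symmetric] by (simp add: add_divide_distrib[symmetric])
qed



definition blkA :: "real \<Rightarrow> nat \<Rightarrow> nat \<Rightarrow> nat set" where
  "blkA a m j = {p. prime p \<and> real m / real j < real p \<and> real p \<le> (real m + real m powr a) / real j}"

definition blk :: "real \<Rightarrow> nat \<Rightarrow> nat set" where
  "blk a m = (\<Union>j\<in>{1..nat \<lfloor>real m powr a\<rfloor>}. blkA a m j)"

lemma le_nat_floor_real: "0 \<le> x \<Longrightarrow> k \<le> nat \<lfloor>x\<rfloor> \<Longrightarrow> real k \<le> x"
proof -
  assume "0 \<le> x" "k \<le> nat \<lfloor>x\<rfloor>"
  then have "real k \<le> real (nat \<lfloor>x\<rfloor>)" by (simp only: of_nat_le_iff)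
  also have "\<dots> = of_int \<lfloor>x\<rfloor>" using \<open>0 \<le> x\<close> by (simp add: of_nat_nat)
  also have "\<dots> \<le> x" by simp
  finally show ?thesis .
qed

lemma pi_diff:
  assumes "x \<le> y"
  shows "real (prime_pi y) - real (prime_pi x) = real (card {p. prime p \<and> x < real p \<and> real p \<le> y})"
proof -
  have fin: "finite {p :: nat. prime p \<and> real p \<le> z}" for z
    by (rule finite_subset[of _ "{..nat \<lfloor>z\<rfloor>}"]) (auto intro: le_nat_floor)
  have eq: "{p. prime p \<and> real p \<le> y} = {p. prime p \<and> real p \<le> x} \<union> {p. prime p \<and> x < real p \<and> real p \<le> y}"
    using assms by auto
  have "card {p. prime p \<and> real p \<le> y} = card {p. prime p \<and> real p \<le> x} + card {p. prime p \<and> x < real p \<and> real p \<le> y}"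
    unfolding eq by (rule card_Un_disjoint) (use fin[of x] in \<open>auto intro: finite_subset[OF _ fin[of y]]\<close>)
  then show ?thesis unfolding prime_pi_def by simp
qed

lemma blkA_big:
  assumes a: "0 < a" "a < 1/2" and m: "m \<ge> 1" and j: "j \<in> {1..nat \<lfloor>real m powr a\<rfloor>}"
    and p: "p \<in> blkA a m j"
  shows "real m powr (1 - a) < real p" "real m powr a < real p" "prime p"
    "real m < real j * real p" "real j * real p \<le> real m + real m powr a"
proof -
  have j1: "real j \<ge> 1" using j by auto
  have jk: "real j \<le> real m powr a" using j by (intro le_nat_floor_real) auto
  show pr: "prime p" using p by (simp add: blkA_def)
  have lo: "real m / real j < real p" and hi: "real p \<le> (real m + real m powr a) / real j"
    using p by (auto simp: blkA_def)
  show "real m < real j * real p" using lo j1 by (simp add: field_simps)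
  show "real j * real p \<le> real m + real m powr a" using hi j1 by (simp add: field_simps)
  have mpos: "real m > 0" using m by simp
  have "real m powr (1 - a) = real m / real m powr a" using mpos by (simp add: powr_diff)
  also have "\<dots> \<le> real m / real j" using j1 jk mpos by (intro divide_left_mono) auto
  finally show big: "real m powr (1 - a) < real p" using lo by linarith
  have "real m powr a \<le> real m powr (1 - a)" using m a by (intro powr_mono) auto
  then show "real m powr a < real p" using big by linarith
qed

lemma blkA_disj:
  assumes a: "0 < a" "a < 1/2" and m: "m \<ge> 1"
    and j: "j1 \<in> {1..nat \<lfloor>real m powr a\<rfloor>}" "j2 \<in> {1..nat \<lfloor>real m powr a\<rfloor>}" "j1 \<noteq> j2"
  shows "blkA a m j1 \<inter> blkA a m j2 = {}"
proof -
  have key: False if "i1 \<in> {1..nat \<lfloor>real m powr a\<rfloor>}" "i2 \<in> {1..nat \<lfloor>real m powr a\<rfloor>}" "i1 < i2"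
    "p \<in> blkA a m i1" "p \<in> blkA a m i2" for i1 i2 p
  proof -
    note A1 = blkA_big[OF a m that(1) that(4)]
    note A2 = blkA_big[OF a m that(2) that(5)]
    have "real i2 \<ge> real i1 + 1" using that(3) by simp
    then have "real i2 * real p \<ge> (real i1 + 1) * real p" by (intro mult_right_mono) auto
    then have "real i2 * real p \<ge> real i1 * real p + real p" by (simp add: algebra_simps)
    then show False using A1 A2 by linarith
  qed
  show ?thesis
  proof (rule ccontr)
    assume "blkA a m j1 \<inter> blkA a m j2 \<noteq> {}"
    then obtain p where "p \<in> blkA a m j1" "p \<in> blkA a m j2" by blast
    then show False using key j by (cases "j1 < j2") (auto simp: not_less order.order_iff_strict)
  qed
qed

lemma blkA_finite: "finite (blkA a m j)"
  by (rule finite_subset[of _ "{..nat \<lfloor>(real m + real m powr a) / real j\<rfloor>}"])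
     (auto simp: blkA_def intro: le_nat_floor)

lemma blk_card_sum:
  assumes a: "0 < a" "a < 1/2" and m: "m \<ge> 1"
  shows "real (card (blk a m)) = (\<Sum>j = 1..nat \<lfloor>real m powr a\<rfloor>.
              real (prime_pi ((real m + real m powr a) / real j)) - real (prime_pi (real m / real j)))"
proof -
  have "card (blk a m) = (\<Sum>j\<in>{1..nat \<lfloor>real m powr a\<rfloor>}. card (blkA a m j))"
    unfolding blk_def
  proof (rule card_UN_disjoint)
    show "\<forall>i\<in>{1..nat \<lfloor>real m powr a\<rfloor>}. \<forall>j\<in>{1..nat \<lfloor>real m powr a\<rfloor>}. i \<noteq> j \<longrightarrow> blkA a m i \<inter> blkA a m j = {}"
      using blkA_disj[OF a m] by blast
  qed (auto simp: blkA_finite)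
  then have "real (card (blk a m)) = (\<Sum>j\<in>{1..nat \<lfloor>real m powr a\<rfloor>}. real (card (blkA a m j)))"
    by simp
  also have "\<dots> = (\<Sum>j = 1..nat \<lfloor>real m powr a\<rfloor>.
              real (prime_pi ((real m + real m powr a) / real j)) - real (prime_pi (real m / real j)))"
  proof (rule sum.cong[OF refl])
    fix j assume j: "j \<in> {1..nat \<lfloor>real m powr a\<rfloor>}"
    have "real m / real j \<le> (real m + real m powr a) / real j"
      using j by (intro divide_right_mono) auto
    from pi_diff[OF this] show "real (card (blkA a m j)) = real (prime_pi ((real m + real m powr a) / real j)) - real (prime_pi (real m / real j))"
      by (simp add: blkA_def)
  qed
  finally show ?thesis .
qed

lemma blk_props:
  assumes a: "0 < a" "a < 1/2" and m: "m \<ge> 1" and p: "p \<in> blk a m"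
  shows "prime p" "real m powr (1 - a) < real p" "real m powr a < real p"
    "\<exists>j. 1 \<le> j \<and> j \<le> nat \<lfloor>real m powr a\<rfloor> \<and> m < j * p \<and> j * p \<le> m + nat \<lfloor>real m powr a\<rfloor>"
proof -
  obtain j where j: "j \<in> {1..nat \<lfloor>real m powr a\<rfloor>}" and pj: "p \<in> blkA a m j"
    using p unfolding blk_def by auto
  note B = blkA_big[OF a m j pj]
  show "prime p" "real m powr (1 - a) < real p" "real m powr a < real p" using B by auto
  have "m < j * p" using B(4) by (simp flip: of_nat_mult)
  moreover have "j * p \<le> m + nat \<lfloor>real m powr a\<rfloor>"
  proof -
    have "real (j * p) - real m \<le> real m powr a" using B(5) by simp
    then have "int (j * p) - int m \<le> \<lfloor>real m powr a\<rfloor>" by (simp add: le_floor_iff)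
    then show ?thesis by linarith
  qed
  ultimately show "\<exists>j. 1 \<le> j \<and> j \<le> nat \<lfloor>real m powr a\<rfloor> \<and> m < j * p \<and> j * p \<le> m + nat \<lfloor>real m powr a\<rfloor>"
    using j by auto
qed

lemma blk_card_le:
  assumes a: "0 < a" "a < 1/2" and m: "m \<ge> 1"
  shows "card (blk a m) \<le> nat \<lfloor>real m powr a\<rfloor>"
proof -
  define k where "k = nat \<lfloor>real m powr a\<rfloor>"
  define f where "f p = (m div p + 1) * p" for p :: nat
  have kp: "k < p" if "p \<in> blk a m" for p
  proof -
    have "real k \<le> real m powr a" unfolding k_def by (rule le_nat_floor_real) auto
    then show ?thesis using blk_props(3)[OF a m that] by linarith
  qed
  have fj: "f p = j * p" if "p \<in> blk a m" "1 \<le> j" "m < j * p" "j * p \<le> m + k" for p j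
  proof -
    have p0: "p > 0" using kp[OF that(1)] by simp
    have "m div p < j" using that(3) p0
      by (metis div_less_iff_less_mult mult.commute)
    moreover have "j - 1 \<le> m div p"
    proof -
      have e1: "(j - 1) * p = j * p - p" by (simp add: diff_mult_distrib)
      have e2: "j * p \<ge> p" using that(2) by simp
      have "(j - 1) * p \<le> m" unfolding e1 using e2 that(4) kp[OF that(1)] by linarith
      then show ?thesis using div_le_mono[of "(j - 1) * p" m p] p0 by simp
    qed
    ultimately have "j = m div p + 1" by simp
    then show ?thesis by (simp add: f_def)
  qed
  have inj: "inj_on f (blk a m)"
  proof (rule inj_onI)
    fix p q assume p: "p \<in> blk a m" and q: "q \<in> blk a m" and eq: "f p = f q"
    obtain i where i: "1 \<le> i" "i \<le> k" "m < i * p" "i * p \<le> m + k"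
      using blk_props(4)[OF a m p] unfolding k_def by blast
    obtain j where j: "1 \<le> j" "j \<le> k" "m < j * q" "j * q \<le> m + k"
      using blk_props(4)[OF a m q] unfolding k_def by blast
    have e: "i * p = j * q" using eq fj[OF p i(1,3,4)] fj[OF q j(1,3,4)] by simp
    show "p = q"
    proof (rule ccontr)
      assume ne: "p \<noteq> q"
      have pp: "prime p" "prime q" using blk_props(1)[OF a m p] blk_props(1)[OF a m q] by auto
      have "p dvd j * q" using e by (metis dvd_triv_right)
      then have "p dvd j \<or> p dvd q" using pp by (simp add: prime_dvd_mult_iff)
      moreover have "\<not> p dvd q" using pp ne by (metis primes_dvd_imp_eq)
      ultimately have "p dvd j" by simp
      then have "p \<le> j" using j(1) by (simp add: dvd_imp_le)
      then show False using j(2) kp[OF p] by simp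
    qed
  qed
  have img: "f ` blk a m \<subseteq> {m+1..m+k}"
  proof
    fix N assume "N \<in> f ` blk a m"
    then obtain p where p: "p \<in> blk a m" and N: "N = f p" by blast
    obtain i where i: "1 \<le> i" "i \<le> k" "m < i * p" "i * p \<le> m + k"
      using blk_props(4)[OF a m p] unfolding k_def by blast
    show "N \<in> {m+1..m+k}" using N fj[OF p i(1,3,4)] i by simp
  qed
  have "card (blk a m) = card (f ` blk a m)" using inj by (simp add: card_image)
  also have "\<dots> \<le> card {m+1..m+k}" using img by (intro card_mono) auto
  also have "\<dots> = k" by simp
  finally show ?thesis unfolding k_def .
qed

lemma refute_big_delta:
  assumes a: "0 < a" "a < 1/2" and d: "\<delta> \<ge> 1"
    and hyp: "\<forall>m\<ge>M. (\<Sum>j = 1..nat \<lfloor>real m powr a\<rfloor>.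
              real (prime_pi ((real m + real m powr a) / real j)) - real (prime_pi (real m / real j)))
           \<ge> \<delta> * real m powr a"
  shows False
proof -
  define M' where "M' = max M 1"
  have intp: "real m powr a = of_int \<lfloor>real m powr a\<rfloor>" if "m \<ge> M'" for m
  proof -
    have m1: "m \<ge> 1" "m \<ge> M" using that by (auto simp: M'_def)
    have "real m powr a \<le> \<delta> * real m powr a" using d by (simp add: mult_le_cancel_right1)
    also have "\<dots> \<le> real (card (blk a m))" using hyp m1 blk_card_sum[OF a m1(1)] by simp
    also have "\<dots> \<le> real (nat \<lfloor>real m powr a\<rfloor>)" using blk_card_le[OF a m1(1)] by (simp only: of_nat_le_iff)
    also have "\<dots> = of_int \<lfloor>real m powr a\<rfloor>" by (simp add: of_nat_nat)
    finally show ?thesis using of_int_floor_le[of "real m powr a"] by linarith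
  qed
  have incr: "\<lfloor>real (m+1) powr a\<rfloor> \<ge> \<lfloor>real m powr a\<rfloor> + 1" if "m \<ge> M'" for m
  proof -
    have "real m powr a < real (m+1) powr a" using that a by (intro powr_less_mono2) (auto simp: M'_def)
    then have "of_int \<lfloor>real m powr a\<rfloor> < (of_int \<lfloor>real (m+1) powr a\<rfloor> :: real)"
      using intp[of m] intp[of "m+1"] that by simp
    then show ?thesis by linarith
  qed
  have ind: "\<lfloor>real (M' + k) powr a\<rfloor> \<ge> int k" for k
  proof (induction k)
    case 0 then show ?case by simp
  next
    case (Suc k)
    have "\<lfloor>real (M' + k + 1) powr a\<rfloor> \<ge> \<lfloor>real (M' + k) powr a\<rfloor> + 1" using incr[of "M' + k"] by simp
    then show ?case using Suc by simp
  qed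
  define k where "k = M' + 3"
  have "real k \<le> real (M' + k) powr a"
    using ind[of k] of_int_floor_le[of "real (M' + k) powr a"] by linarith
  also have "\<dots> \<le> real (M' + k) powr (1/2)" using a by (intro powr_mono) (auto simp: k_def)
  also have "\<dots> = sqrt (real (M' + k))" by (simp add: powr_half_sqrt)
  also have "\<dots> < real k"
  proof (rule real_less_lsqrt)
    have h: "0 \<le> real M' * real M'" "0 \<le> real M'" by simp_all
    have "(real k)^2 = real M' * real M' + 6 * real M' + 9" unfolding k_def power2_eq_square by (simp add: algebra_simps)
    moreover have "real (M' + k) = 2 * real M' + 3" unfolding k_def by simp
    ultimately show "real (M' + k) < (real k)^2" using h by linarith
  qed (auto simp: k_def)
  finally show False by simp
qed



lemma card_primes_le_half: "card {p::nat. prime p \<and> p \<le> N} \<le> (N + 1) div 2"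
proof -
  define f where "f p = (p + 1) div 2" for p :: nat
  have inj: "inj_on f {p. prime p \<and> p \<le> N}"
  proof (rule inj_onI)
    fix p q assume p: "p \<in> {p. prime p \<and> p \<le> N}" and q: "q \<in> {p. prime p \<and> p \<le> N}" and e: "f p = f q"
    have pp: "prime p" "prime q" using p q by auto
    have "p = 2 \<or> odd p" using pp(1) prime_odd_nat[of p] prime_ge_2_nat[of p] by linarith
    moreover have "q = 2 \<or> odd q" using pp(2) prime_odd_nat[of q] prime_ge_2_nat[of q] by linarith
    moreover have "p \<ge> 2" "q \<ge> 2" using pp prime_ge_2_nat by auto
    ultimately show "p = q" using e unfolding f_def by (auto elim!: oddE)
  qed
  have "f ` {p. prime p \<and> p \<le> N} \<subseteq> {1..(N+1) div 2}"
  proof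
    fix y assume "y \<in> f ` {p. prime p \<and> p \<le> N}"
    then obtain x where x: "prime x" "x \<le> N" "y = f x" by auto
    have "x \<ge> 2" using x prime_ge_2_nat by auto
    have h1: "2 div 2 \<le> (x+1) div 2" using \<open>x \<ge> 2\<close> by (intro div_le_mono) linarith
    have h2: "(x+1) div 2 \<le> (N+1) div 2" using x(2) by (intro div_le_mono) linarith
    have h3: "y = (x+1) div 2" using x(3) f_def by blast
    have h4: "(2::nat) div 2 = 1" by simp
    show "y \<in> {1..(N+1) div 2}" unfolding atLeastAtMost_iff using h1 h2 h3 h4 by linarith
  qed
  then have "card (f ` {p. prime p \<and> p \<le> N}) \<le> card {1..(N+1) div 2}" by (intro card_mono) auto
  then show ?thesis using inj by (simp add: card_image)
qed

lemma omega_prod_le: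
  assumes "n \<ge> 1"
  shows "omega (\<Prod>i=1..l. n + i) \<le> card {p::nat. prime p \<and> p \<le> n + l}"
proof -
  have "prime_factors (\<Prod>i=1..l. n + i) \<subseteq> {p. prime p \<and> p \<le> n + l}"
  proof
    fix p assume p: "p \<in> prime_factors (\<Prod>i=1..l. n + i)"
    then have pp: "prime p" and d: "p dvd (\<Prod>i=1..l. n + i)" by auto
    then obtain i where "i \<in> {1..l}" "p dvd n + i" by (auto simp: prime_dvd_prod_iff)
    then have "p \<le> n + i" by (intro dvd_imp_le) auto
    then show "p \<in> {p. prime p \<and> p \<le> n + l}" using pp \<open>i \<in> {1..l}\<close> by auto
  qed
  then show ?thesis unfolding omega_def by (intro card_mono) auto
qed

lemma g1_prop:
  assumes "n \<ge> 1" "l \<in> {1..g1 n}"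
  shows "omega (\<Prod>i=1..l. n + i) \<ge> l"
proof -
  define P where "P k = (k \<ge> 1 \<and> (\<forall>l\<in>{1..k}. omega (\<Prod>i=1..l. n + i) \<ge> l))" for k
  have P1: "P 1"
  proof -
    have "omega (n + 1) \<ge> 1"
    proof -
      have "n + 1 \<noteq> 1" using assms by simp
      then obtain p where "prime p" "p dvd n + 1" using prime_factor_nat by blast
      then have "p \<in> prime_factors (n+1)" by (auto simp: in_prime_factors_iff)
      then show ?thesis unfolding omega_def by (metis One_nat_def Suc_leI card_gt_0_iff empty_iff finite_set_mset)
    qed
    then show ?thesis unfolding P_def by auto
  qed
  have bnd: "k \<le> n + 1" if "P k" for k
  proof -
    have "k \<le> omega (\<Prod>i=1..k. n + i)" using that unfolding P_def by auto
    also have "\<dots> \<le> card {p::nat. prime p \<and> p \<le> n + k}" by (rule omega_prod_le[OF assms(1)])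
    also have "\<dots> \<le> (n + k + 1) div 2" by (rule card_primes_le_half)
    finally show ?thesis by linarith
  qed
  have PG: "P (Greatest P)" by (rule GreatestI_nat[where P=P, OF P1 bnd])
  have "g1 n = Greatest P" unfolding g1_def P_def by (rule refl)
  then have "P (g1 n)" using PG by simp
  then have "\<forall>l\<in>{1..g1 n}. omega (\<Prod>i=1..l. n + i) \<ge> l" unfolding P_def by blast
  then show ?thesis using assms(2) by blast
qed



lemma prod_consec_fact: "(\<Prod>i=1..l. n + i) * fact n = (fact (n + l) :: nat)"
proof (induction l)
  case 0 then show ?case by simp
next
  case (Suc l)
  have "(\<Prod>i=1..Suc l. n + i) = (\<Prod>i=1..l. n + i) * (n + Suc l)"
    by (simp add: prod.nat_ivl_Suc')
  then have "(\<Prod>i=1..Suc l. n + i) * fact n = (n + Suc l) * ((\<Prod>i=1..l. n + i) * fact n)"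
    by (simp add: algebra_simps)
  also have "\<dots> = (n + Suc l) * fact (n + l)" using Suc by simp
  also have "\<dots> = fact (n + Suc l)" by simp
  finally show ?case .
qed

lemma prod_consec_binom: "(\<Prod>i=1..l. n + i) = fact l * ((n + l) choose l)"
proof -
  have e1: "(\<Prod>i=1..l. n + i) * fact n = (fact (n + l) :: nat)" by (rule prod_consec_fact)
  have e2: "fact l * fact n * ((n + l) choose l) = (fact (n + l) :: nat)"
    using binomial_fact_lemma[of l "n+l", OF le_add2] unfolding add_diff_cancel_right' .
  have "(\<Prod>i=1..l. n + i) * fact n = (fact l * ((n + l) choose l)) * fact n"
    using e1 e2 by (metis mult.commute mult.assoc)
  moreover have "(fact n :: nat) \<noteq> 0" by simp
  ultimately show ?thesis by (metis mult_right_cancel)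
qed

lemma pow_le_exp_fact: "real l ^ l \<le> exp (real l) * fact l"
proof (induction l)
  case 0 then show ?case by simp
next
  case (Suc l)
  have step: "real (Suc l) ^ l \<le> exp 1 * real l ^ l"
  proof (cases "l = 0")
    case True then show ?thesis by simp
  next
    case False
    then have lp: "real l > 0" by simp
    have "real (Suc l) = real l * (1 + 1 / real l)" using lp by (simp add: field_simps)
    then have "real (Suc l) ^ l = real l ^ l * (1 + 1 / real l) ^ l" by (simp add: power_mult_distrib)
    also have "(1 + 1 / real l) ^ l \<le> exp (1 / real l) ^ l"
      by (intro power_mono) (use exp_ge_add_one_self[of "1/real l"] in auto)
    also have "exp (1 / real l) ^ l = exp 1" using lp by (simp add: exp_of_nat_mult[symmetric])
    finally show ?thesis using lp by (simp add: mult_left_mono mult.commute)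
  qed
  have "real (Suc l) ^ Suc l = real (Suc l) * real (Suc l) ^ l" by simp
  also have "\<dots> \<le> real (Suc l) * (exp 1 * real l ^ l)" using step by (intro mult_left_mono) auto
  also have "\<dots> \<le> real (Suc l) * (exp 1 * (exp (real l) * fact l))"
    using Suc by (intro mult_left_mono) auto
  also have "\<dots> = exp (real (Suc l)) * fact (Suc l)"
    by (simp add: exp_add[symmetric] algebra_simps)
  finally show ?case .
qed

lemma budget:
  assumes l1: "l \<ge> 1" and n1: "n \<ge> 1"
    and Q: "\<forall>p\<in>Q. prime p \<and> l < p \<and> p dvd (\<Prod>i=1..l. n + i)" and finQ: "finite Q"
  shows "(\<Sum>p\<in>Q. ln (real p)) \<le> real l * (ln (real (n + l)) - ln (real l) + 1)"
proof -
  define C where "C = (n + l) choose l"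
  have Cpos: "C > 0" unfolding C_def by simp
  have dv: "\<Prod>Q dvd C"
  proof (rule prod_primes_dvd[OF finQ], safe)
    fix p assume p: "p \<in> Q"
    have eqP: "(\<Prod>i=1..l. n + i) = fact l * C" unfolding C_def by (rule prod_consec_binom)
    have d: "p dvd (\<Prod>i=1..l. n + i)" "prime p" "l < p" using Q p by auto
    then have pp: "prime p" "l < p" "p dvd fact l * C" by (simp_all only: eqP)
    have "\<not> p dvd fact l" using pp prime_dvd_fact_iff[of p l] by simp
    then show "p dvd C" using pp prime_dvd_mult_iff by blast
    show "prime p" using pp by simp
  qed
  have prodQ: "(\<Prod>p\<in>Q. real p) \<le> real C"
  proof -
    have "\<Prod>Q \<le> C" using dv Cpos by (intro dvd_imp_le)
    then show ?thesis by (metis of_nat_le_iff of_nat_prod prod.cong)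
  qed
  have Qpos: "\<forall>p\<in>Q. real p > 0" using Q prime_gt_0_nat by auto
  have "(\<Sum>p\<in>Q. ln (real p)) = ln (\<Prod>p\<in>Q. real p)"
    using Qpos finQ by (simp add: ln_prod)
  also have "\<dots> \<le> ln (real C)"
    using prodQ Qpos by (intro ln_mono) (auto intro: prod_pos)
  also have "real C * fact l \<le> real (n + l) ^ l"
  proof -
    have eqP: "(\<Prod>i=1..l. n + i) = fact l * C" unfolding C_def by (rule prod_consec_binom)
    have "real C * fact l = real (fact l * C)" by simp
    also have "\<dots> = real (\<Prod>i=1..l. n + i)" by (simp only: eqP)
    finally have "real C * fact l = real (\<Prod>i=1..l. n + i)" .
    also have "\<dots> = (\<Prod>i=1..l. real (n + i))" by simp
    also have "\<dots> \<le> (\<Prod>i=1..l. real (n + l))" by (intro prod_mono) auto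
    also have "\<dots> = real (n + l) ^ l" by simp
    finally show ?thesis .
  qed
  then have "real C * (exp (real l) * fact l) \<le> real (n + l) ^ l * exp (real l)"
    by (simp add: algebra_simps mult_right_mono)
  then have "real C * real l ^ l \<le> real (n + l) ^ l * exp (real l)"
    using pow_le_exp_fact[of l] order_trans[OF mult_left_mono] by (meson of_nat_0_le_iff order_trans)
  then have "real C \<le> real (n + l) ^ l * exp (real l) / real l ^ l"
    using l1 by (simp add: field_simps)
  then have "ln (real C) \<le> ln (real (n + l) ^ l * exp (real l) / real l ^ l)"
    using Cpos by (intro ln_mono) auto
  also have "\<dots> = real l * (ln (real (n + l)) - ln (real l) + 1)"
    using l1 n1 by (simp add: ln_div ln_mult ln_realpow algebra_simps)
  finally show ?thesis .
qed

primrec seqm :: "real \<Rightarrow> nat \<Rightarrow> nat \<Rightarrow> nat" where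
  "seqm a n 0 = n"
| "seqm a n (Suc t) = seqm a n t + nat \<lfloor>real (seqm a n t) powr a\<rfloor>"

lemma blk_finite: "finite (blk a m)"
  unfolding blk_def by (auto intro: blkA_finite)

lemma main_count:
  fixes a \<delta> :: real and n l K :: nat
  assumes a: "0 < a" "a < 1/2" and dpos: "\<delta> > 0"
    and hyp: "\<forall>m\<ge>n. real (card (blk a m)) \<ge> \<delta> * real m powr a"
    and n2: "n \<ge> 2" and l1: "l \<ge> 1" and ln: "l \<le> n"
    and big: "real l < real n powr (1 - a)"
    and om: "omega (\<Prod>i=1..l. n + i) \<ge> l"
    and K1: "K \<ge> 1"
  shows "\<exists>g b::nat. real l \<le> real (card {p. prime p \<and> p \<le> l}) + real g + real b \<and>
     real g \<ge> \<delta> * (real l - real (n + l) powr a) \<and>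
     real g * ((1 - a) * ln (real n)) + real b * ln (real l)
       + (real b - real (card {p. prime p \<and> p \<le> K * l})) * ln (real K)
       \<le> real l * (ln (real (n + l)) - ln (real l) + 1)"
proof -
  define s where "s = seqm a n"
  define P where "P = (\<Prod>i=1..l. n + i)"
  have Ppos: "P > 0" unfolding P_def by (intro prod_pos) auto
  have s0: "s 0 = n" and sS: "\<And>t. s (Suc t) = s t + nat \<lfloor>real (s t) powr a\<rfloor>" by (simp_all add: s_def)
  have sge: "s t \<ge> n + t" for t
  proof (induction t)
    case 0 then show ?case using s0 by simp
  next
    case (Suc t)
    have "real (s t) \<ge> 1" using Suc n2 by simp
    then have "real (s t) powr a \<ge> 1" using a by (simp add: ge_one_powr_ge_zero)
    then have "nat \<lfloor>real (s t) powr a\<rfloor> \<ge> 1" by (simp add: le_nat_floor)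
    then show ?case using Suc sS[of t] by simp
  qed
  have smono: "s t \<le> s t'" if "t \<le> t'" for t t'
  proof -
    have "incseq s" by (rule incseq_SucI) (simp add: sS)
    then show ?thesis using that by (simp add: incseq_def)
  qed
  define T where "T = (LEAST t. n + l < s (Suc t))"
  have ex: "n + l < s (Suc l)" using sge[of "Suc l"] by simp
  have hT: "n + l < s (Suc T)" unfolding T_def by (rule LeastI[of _ l]) (rule ex)
  have lT: "s (Suc t) \<le> n + l" if "t < T" for t
    using not_less_Least[of t "\<lambda>t. n + l < s (Suc t)"] that unfolding T_def by simp
  have sT: "s T \<le> n + l"
  proof (cases T)
    case 0 then show ?thesis using s0 by simp
  next
    case (Suc t) then show ?thesis using lT[of t] by simp
  qed
  define Q where "Q = {p. prime p \<and> l < p \<and> p dvd P}"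
  have finQ: "finite Q"
    by (rule finite_subset[of _ "{..P}"]) (auto simp: Q_def intro: dvd_imp_le[OF _ Ppos])
  define Qg where "Qg = (\<Union>t\<in>{..<T}. blk a (s t))"
  have nl: "real n powr (1 - a) > real l" using big by simp
  have good: "prime p \<and> real n powr (1 - a) < real p \<and> l < p \<and>
      (\<exists>j. s t < j * p \<and> j * p \<le> s (Suc t) \<and> s (Suc t) \<le> n + l)"
    if t: "t < T" and p: "p \<in> blk a (s t)" for t p
  proof -
    have m1: "s t \<ge> 1" using sge[of t] n2 by simp
    note B = blk_props[OF a m1 p]
    have "real n powr (1 - a) \<le> real (s t) powr (1 - a)"
      using sge[of t] a by (intro powr_mono2) auto
    then have pb: "real n powr (1 - a) < real p" using B(2) by linarith
    then have "l < p" using nl by simp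
    moreover obtain j where "s t < j * p" "j * p \<le> s (Suc t)" using B(4) sS[of t] by auto
    ultimately show ?thesis using B(1) pb lT[OF t] by blast
  qed
  have QgQ: "Qg \<subseteq> Q"
  proof
    fix p assume "p \<in> Qg"
    then obtain t where t: "t < T" and p: "p \<in> blk a (s t)" unfolding Qg_def by auto
    note G = good[OF t p]
    obtain j where j: "s t < j * p" "j * p \<le> n + l" using G by auto
    have "n < j * p" using j sge[of t] by simp
    then have iin: "j * p - n \<in> {1..l}" using j by auto
    have "n + (j * p - n) dvd P" unfolding P_def by (rule dvd_prodI[OF _ iin]) simp
    then have "j * p dvd P" using \<open>n < j * p\<close> by simp
    then have "p dvd P" by (rule dvd_trans[OF dvd_triv_right])
    then show "p \<in> Q" using G unfolding Q_def by auto
  qed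
  have disj: "blk a (s t1) \<inter> blk a (s t2) = {}" if "t1 < T" "t2 < T" "t1 < t2" for t1 t2
  proof (rule ccontr)
    assume "blk a (s t1) \<inter> blk a (s t2) \<noteq> {}"
    then obtain p where p1: "p \<in> blk a (s t1)" and p2: "p \<in> blk a (s t2)" by auto
    note G1 = good[OF that(1) p1] and G2 = good[OF that(2) p2]
    obtain j1 where j1: "s t1 < j1 * p" "j1 * p \<le> s (Suc t1)" using G1 by auto
    obtain j2 where j2: "s t2 < j2 * p" "j2 * p \<le> s (Suc t2)" "s (Suc t2) \<le> n + l" using G2 by auto
    have "s (Suc t1) \<le> s t2" using that by (intro smono) simp
    then have "j1 * p < j2 * p" using j1 j2 by linarith
    then have "j1 < j2" by (metis mult_less_cancel2)
    then have "(j1 + 1) * p \<le> j2 * p" by (intro mult_right_mono) auto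
    then have "j1 * p + p \<le> n + l" using j2 by simp
    moreover have "n \<le> s t1" using sge[of t1] by simp
    ultimately show False using j1 G1 by linarith
  qed
  have cardQg: "card Qg = (\<Sum>t<T. card (blk a (s t)))"
    unfolding Qg_def
  proof (rule card_UN_disjoint)
    show "\<forall>i\<in>{..<T}. \<forall>j\<in>{..<T}. i \<noteq> j \<longrightarrow> blk a (s i) \<inter> blk a (s j) = {}"
    proof (intro ballI impI)
      fix i j assume "i \<in> {..<T}" "j \<in> {..<T}" "i \<noteq> j"
      then show "blk a (s i) \<inter> blk a (s j) = {}"
        using disj[of i j] disj[of j i] by (cases "i < j") (auto simp: Int_commute)
    qed
  qed (auto simp: blk_finite)
  have gbound: "real (card Qg) \<ge> \<delta> * (real l - real (n + l) powr a)"
  proof -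
    have "real (card Qg) = (\<Sum>t<T. real (card (blk a (s t))))" by (simp add: cardQg)
    also have "\<dots> \<ge> (\<Sum>t<T. \<delta> * (real (s (Suc t)) - real (s t)))"
    proof (rule sum_mono)
      fix t assume "t \<in> {..<T}"
      have "real (s (Suc t)) - real (s t) = real (nat \<lfloor>real (s t) powr a\<rfloor>)" using sS[of t] by simp
      also have "\<dots> \<le> real (s t) powr a" by (rule le_nat_floor_real) auto
      finally have "\<delta> * (real (s (Suc t)) - real (s t)) \<le> \<delta> * real (s t) powr a"
        using dpos by (intro mult_left_mono) auto
      also have "\<dots> \<le> real (card (blk a (s t)))" using hyp sge[of t] by auto
      finally show "\<delta> * (real (s (Suc t)) - real (s t)) \<le> real (card (blk a (s t)))" .
    qed
    also have "(\<Sum>t<T. \<delta> * (real (s (Suc t)) - real (s t))) = \<delta> * (real (s T) - real (s 0))"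
      using sum_lessThan_telescope[of "\<lambda>t. real (s t)" T] by (simp add: sum_distrib_left[symmetric])
    finally have g1: "real (card Qg) \<ge> \<delta> * (real (s T) - real n)" using s0 by simp
    have "n + l < s T + nat \<lfloor>real (s T) powr a\<rfloor>" using hT sS[of T] by simp
    then have "real (n + l) < real (s T) + real (nat \<lfloor>real (s T) powr a\<rfloor>)"
      by (simp only: of_nat_add[symmetric] of_nat_less_iff)
    moreover have "real (nat \<lfloor>real (s T) powr a\<rfloor>) \<le> real (s T) powr a" by (rule le_nat_floor_real) auto
    moreover have "real (s T) powr a \<le> real (n + l) powr a" using sT a by (intro powr_mono2) auto
    ultimately have "real (s T) - real n \<ge> real l - real (n + l) powr a" unfolding of_nat_add by linarith
    then have "\<delta> * (real (s T) - real n) \<ge> \<delta> * (real l - real (n + l) powr a)"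
      using dpos by (intro mult_left_mono) auto
    then show ?thesis using g1 by linarith
  qed
  define Qb where "Qb = Q - Qg"
  have finQg: "finite Qg" using finQ QgQ by (rule finite_subset[rotated])
  have finQb: "finite Qb" using finQ by (simp add: Qb_def)
  have cardQ: "card Q = card Qg + card Qb"
    using card_Diff_subset[OF finQg QgQ] card_mono[OF finQ QgQ] unfolding Qb_def by simp
  have omb: "real l \<le> real (card {p. prime p \<and> p \<le> l}) + real (card Qg) + real (card Qb)"
  proof -
    have "prime_factors P \<subseteq> {p. prime p \<and> p \<le> l} \<union> Q"
    proof
      fix p assume "p \<in> prime_factors P"
      then have "prime p" "p dvd P" by auto
      then show "p \<in> {p. prime p \<and> p \<le> l} \<union> Q" unfolding Q_def by auto
    qed
    then have "omega P \<le> card ({p. prime p \<and> p \<le> l} \<union> Q)"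
      unfolding omega_def using finQ by (intro card_mono) auto
    also have "\<dots> \<le> card {p. prime p \<and> p \<le> l} + card Q" by (rule card_Un_le)
    finally have "l \<le> card {p. prime p \<and> p \<le> l} + card Q" using om unfolding P_def by linarith
    then show ?thesis using cardQ by simp
  qed
  have budg: "(\<Sum>p\<in>Q. ln (real p)) \<le> real l * (ln (real (n + l)) - ln (real l) + 1)"
    by (rule budget[OF l1 _ _ finQ]) (use n2 in \<open>auto simp: Q_def P_def\<close>)
  have split: "(\<Sum>p\<in>Q. ln (real p)) = (\<Sum>p\<in>Qb. ln (real p)) + (\<Sum>p\<in>Qg. ln (real p))"
    unfolding Qb_def by (rule sum.subset_diff[OF QgQ finQ])
  have sg: "(\<Sum>p\<in>Qg. ln (real p)) \<ge> real (card Qg) * ((1 - a) * ln (real n))"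
  proof -
    have "(1 - a) * ln (real n) \<le> ln (real p)" if pQ: "p \<in> Qg" for p
    proof -
      obtain t where t: "t < T" and p: "p \<in> blk a (s t)" using pQ unfolding Qg_def by auto
      have "real n powr (1 - a) < real p" using good[OF t p] by simp
      then have "ln (real n powr (1 - a)) \<le> ln (real p)" using n2 by (intro ln_mono) auto
      then show ?thesis using n2 by (simp add: ln_powr)
    qed
    then show ?thesis by (metis sum_bounded_below)
  qed
  define Qb1 where "Qb1 = {p\<in>Qb. p \<le> K * l}"
  define Qb2 where "Qb2 = {p\<in>Qb. K * l < p}"
  have Qbl: "p \<in> Qb \<Longrightarrow> l < p \<and> prime p" for p unfolding Qb_def Q_def by auto
  have fb: "finite Qb1" "finite Qb2" using finQb unfolding Qb1_def Qb2_def by auto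
  have Qbsplit: "Qb = Qb1 \<union> Qb2" "Qb1 \<inter> Qb2 = {}" unfolding Qb1_def Qb2_def by auto
  have cb: "card Qb = card Qb1 + card Qb2" using Qbsplit fb by (simp add: card_Un_disjoint)
  have c1: "card Qb1 \<le> card {p. prime p \<and> p \<le> K * l}"
    by (rule card_mono) (auto simp: Qb1_def dest: Qbl)
  have lnl: "ln (real l) \<ge> 0" using l1 by simp
  have lnK: "ln (real K) \<ge> 0" using K1 by simp
  have sb1: "(\<Sum>p\<in>Qb1. ln (real p)) \<ge> real (card Qb1) * ln (real l)"
  proof -
    have "ln (real l) \<le> ln (real p)" if "p \<in> Qb1" for p
      using Qbl[of p] that l1 by (intro ln_mono) (auto simp: Qb1_def)
    then show ?thesis by (metis sum_bounded_below)
  qed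
  have sb2: "(\<Sum>p\<in>Qb2. ln (real p)) \<ge> real (card Qb2) * (ln (real l) + ln (real K))"
  proof -
    have "ln (real l) + ln (real K) \<le> ln (real p)" if "p \<in> Qb2" for p
    proof -
      have "K * l < p" using that unfolding Qb2_def by simp
      then have "real (K * l) < real p" by (simp only: of_nat_less_iff)
      then have "ln (real (K * l)) \<le> ln (real p)" using l1 K1 by (intro ln_mono) auto
      then show ?thesis using l1 K1 by (simp add: ln_mult)
    qed
    then show ?thesis by (metis sum_bounded_below)
  qed
  have sb: "(\<Sum>p\<in>Qb. ln (real p)) \<ge> real (card Qb) * ln (real l)
      + (real (card Qb) - real (card {p. prime p \<and> p \<le> K * l})) * ln (real K)"
  proof -
    have "(\<Sum>p\<in>Qb. ln (real p)) = (\<Sum>p\<in>Qb1. ln (real p)) + (\<Sum>p\<in>Qb2. ln (real p))"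
      using Qbsplit fb by (simp add: sum.union_disjoint)
    moreover have "real (card Qb) - real (card {p. prime p \<and> p \<le> K * l}) \<le> real (card Qb2)"
      using cb c1 by simp
    then have "(real (card Qb) - real (card {p. prime p \<and> p \<le> K * l})) * ln (real K) \<le> real (card Qb2) * ln (real K)"
      using lnK by (intro mult_right_mono) auto
    moreover have "real (card Qb) * ln (real l) = real (card Qb1) * ln (real l) + real (card Qb2) * ln (real l)"
      using cb by (simp add: algebra_simps)
    ultimately show ?thesis using sb1 sb2 by (simp add: algebra_simps)
  qed
  show ?thesis
  proof (intro exI conjI)
    show "real l \<le> real (card {p. prime p \<and> p \<le> l}) + real (card Qg) + real (card Qb)" by (rule omb)
    show "real (card Qg) \<ge> \<delta> * (real l - real (n + l) powr a)" by (rule gbound)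
    show "real (card Qg) * ((1 - a) * ln (real n)) + real (card Qb) * ln (real l)
       + (real (card Qb) - real (card {p. prime p \<and> p \<le> K * l})) * ln (real K)
       \<le> real l * (ln (real (n + l)) - ln (real l) + 1)"
      using budg split sg sb by linarith
  qed
qed



lemma final_contra:
  fixes a \<delta> \<gamma> L ll lnnl H l g b pil piX w :: real
  assumes d: "0 < \<delta>" "\<delta> < 1" and a: "0 < a" "a < 1"
    and gam: "(2 - \<delta>) * \<gamma> = 1 - \<delta> * (1 - a)"
    and H1: "l \<le> pil + g + b"
    and H2: "g \<ge> \<delta> * (l - w)"
    and H3: "g * ((1 - a) * L) + b * ll + (b - piX) * H \<le> l * (lnnl - ll + 1)"
    and H4: "ll \<ge> \<gamma> * L"
    and H5: "lnnl \<le> L + 1"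
    and H6: "(1 - a) * L - ll - H \<ge> 0"
    and H7: "pil * (ll + H) \<le> 12 * l"
    and H8: "piX * H \<le> l"
    and H9: "w * L \<le> l"
    and H10: "(1 - \<delta>) * H > 16"
    and pos: "l > 0" "H \<ge> 0" "ll \<ge> 0" "L \<ge> 0" "w \<ge> 0"
  shows False
proof -
  define c where "c = (1 - a) * L - ll - H"
  have c0: "c \<ge> 0" using H6 by (simp add: c_def)
  have cL: "c \<le> L" using pos a by (simp add: c_def algebra_simps)
  have s1: "b * (ll + H) \<ge> (l - pil - g) * (ll + H)"
    using H1 pos by (intro mult_right_mono) auto
  have s2: "l * (lnnl - ll + 1) \<le> l * (L + 2 - ll)" using H5 pos by (intro mult_left_mono) auto
  have e3: "g * ((1 - a) * L) + b * ll + (b - piX) * H = g * ((1 - a) * L) + b * (ll + H) - piX * H"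
    by (simp add: algebra_simps)
  have s3: "g * ((1 - a) * L) + (l - pil - g) * (ll + H) \<le> l * (L + 2 - ll) + piX * H"
    using H3 s1 s2 e3 by linarith
  have e4: "g * ((1 - a) * L) + (l - pil - g) * (ll + H) = g * c + l * (ll + H) - pil * (ll + H)"
    by (simp add: c_def algebra_simps)
  have s5: "g * c \<ge> \<delta> * (l - w) * c" using H2 c0 by (intro mult_right_mono) auto
  have s6: "\<delta> * w * c \<le> w * L"
  proof -
    have "\<delta> * w * c \<le> 1 * w * c" using d pos c0 by (intro mult_right_mono) auto
    also have "\<dots> \<le> w * L" using cL pos by (simp add: mult_left_mono)
    finally show ?thesis .
  qed
  have e7: "\<delta> * (l - w) * c = \<delta> * l * c - \<delta> * w * c" by (simp add: algebra_simps)
  have e8: "\<delta> * l * c + l * (ll + H) - l * (L - ll)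
      = l * (((2 - \<delta>) * ll - (1 - \<delta> * (1 - a)) * L) + (1 - \<delta>) * H)"
    by (simp add: c_def algebra_simps)
  have s9: "(2 - \<delta>) * ll - (1 - \<delta> * (1 - a)) * L \<ge> 0"
  proof -
    have "(2 - \<delta>) * ll \<ge> (2 - \<delta>) * (\<gamma> * L)" using H4 d by (intro mult_left_mono) auto
    also have "(2 - \<delta>) * (\<gamma> * L) = (1 - \<delta> * (1 - a)) * L" using gam by (simp add: mult.assoc[symmetric])
    finally show ?thesis by simp
  qed
  have s10: "l * (((2 - \<delta>) * ll - (1 - \<delta> * (1 - a)) * L) + (1 - \<delta>) * H) \<ge> l * ((1 - \<delta>) * H)"
    using s9 pos by (intro mult_left_mono) auto
  have "l * ((1 - \<delta>) * H) \<le> 16 * l"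
    using s3 e4 s5 s6 e7 e8 s10 H7 H8 H9 by (simp add: algebra_simps)
  then have "(1 - \<delta>) * H \<le> 16" using pos by (simp add: mult.commute)
  then show False using H10 by simp
qed



lemma per_n:
  fixes \<alpha> \<delta> \<gamma> H :: real and n M K :: nat
  assumes a: "0 < \<alpha>" "\<alpha> < 1/2" and d: "0 < \<delta>" "\<delta> < 1"
    and gam: "(2 - \<delta>) * \<gamma> = 1 - \<delta> * (1 - \<alpha>)" and ga: "\<alpha> < \<gamma>" and gh: "\<gamma> < 1/2"
    and hM: "\<forall>m\<ge>M. (\<Sum>j = 1..nat \<lfloor>real m powr \<alpha>\<rfloor>.
              real (prime_pi ((real m + real m powr \<alpha>) / real j)) - real (prime_pi (real m / real j)))
           \<ge> \<delta> * real m powr \<alpha>"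
    and K1: "K \<ge> 1" and Hdef: "H = ln (real K)" and H10: "(1 - \<delta>) * H > 16"
    and E1: "real n powr \<gamma> + 1 < real n powr (1 - \<alpha>)"
    and E2: "(1 - \<alpha> - \<gamma>) * ln (real n) \<ge> ln 2 + H"
    and E3: "\<gamma> * ln (real n) \<ge> (6 * real K + 1) * H + 1"
    and E4: "2 * real n powr \<alpha> * ln (real n) \<le> real n powr \<gamma>"
    and E5: "real n powr \<gamma> \<ge> 2"
    and E6: "real n \<ge> real M + 2"
  shows "real (g1 n) < real n powr \<gamma>"
proof (rule ccontr)
  assume "\<not> real (g1 n) < real n powr \<gamma>"
  then have g1b: "real n powr \<gamma> \<le> real (g1 n)" by simp
  have n2: "n \<ge> 2" using E6 by simp
  have npos: "real n > 0" using n2 by simp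
  define x where "x = real n powr \<gamma>"
  define l where "l = nat \<lceil>x\<rceil>"
  have x2: "x \<ge> 2" using E5 by (simp add: x_def)
  have lx: "real l \<ge> x" unfolding l_def by (rule real_nat_ceiling_ge)
  have lx1: "real l \<le> x + 1"
  proof -
    have "real l = of_int \<lceil>x\<rceil>" unfolding l_def using x2 by (simp add: of_nat_nat)
    also have "\<dots> \<le> x + 1" by (rule of_int_ceiling_le_add_one)
    finally show ?thesis .
  qed
  have l2: "l \<ge> 2" using lx x2 by simp
  have lg: "l \<le> g1 n"
  proof -
    have "x \<le> real (g1 n)" using g1b unfolding x_def .
    then show ?thesis unfolding l_def by simp
  qed
  have xn: "x \<le> real n"
  proof -
    have "x \<le> real n powr 1" unfolding x_def using n2 gh by (intro powr_mono) auto
    then show ?thesis using npos by simp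
  qed
  have ln_: "l \<le> n"
  proof -
    show ?thesis unfolding l_def using xn by simp
  qed
  have om: "omega (\<Prod>i=1..l. n + i) \<ge> l" using g1_prop[of n l] n2 l2 lg by simp
  have hyp: "\<forall>m\<ge>n. real (card (blk \<alpha> m)) \<ge> \<delta> * real m powr \<alpha>"
  proof (intro allI impI)
    fix m assume "n \<le> m"
    then have "m \<ge> M" "m \<ge> 1" using E6 n2 by auto
    then show "real (card (blk \<alpha> m)) \<ge> \<delta> * real m powr \<alpha>"
      using hM blk_card_sum[OF a \<open>m \<ge> 1\<close>] by simp
  qed
  have big: "real l < real n powr (1 - \<alpha>)" using lx1 E1 unfolding x_def by linarith
  obtain g b :: nat where
    M1: "real l \<le> real (card {p. prime p \<and> p \<le> l}) + real g + real b" and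
    M2: "real g \<ge> \<delta> * (real l - real (n + l) powr \<alpha>)" and
    M3: "real g * ((1 - \<alpha>) * ln (real n)) + real b * ln (real l)
       + (real b - real (card {p. prime p \<and> p \<le> K * l})) * ln (real K)
       \<le> real l * (ln (real (n + l)) - ln (real l) + 1)"
    using main_count[OF a d(1) hyp n2 _ ln_ big om K1] l2 by auto
  define L where "L = ln (real n)"
  define ll where "ll = ln (real l)"
  have L0: "L \<ge> 0" using n2 by (simp add: L_def)
  have H0: "H \<ge> 0" using K1 Hdef by simp
  have H4: "ll \<ge> \<gamma> * L"
  proof -
    have "ln x \<le> ll" unfolding ll_def using lx x2 by (intro ln_mono) auto
    moreover have "ln x = \<gamma> * L" unfolding x_def L_def using npos by (simp add: ln_powr)
    ultimately show ?thesis by simp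
  qed
  have ll1: "ll \<ge> (6 * real K + 1) * H + 1" using H4 E3 unfolding L_def by linarith
  have KH: "6 * real K * H \<ge> 0" using H0 by simp
  have eKH: "(6 * real K + 1) * H + 1 = 6 * real K * H + H + 1" by (simp add: algebra_simps)
  have llpos: "ll > 0" using ll1 KH H0 eKH by linarith
  have llH: "ll \<ge> H" using ll1 KH eKH by linarith
  have ll6: "ll \<ge> 6 * real K * H" using ll1 H0 K1 by (simp add: algebra_simps)
  have H5: "ln (real (n + l)) \<le> L + 1"
  proof -
    have "ln (real (n + l)) \<le> ln (2 * real n)" using ln_ npos by (intro ln_mono) auto
    also have "\<dots> = ln 2 + L" unfolding L_def using npos by (simp add: ln_mult)
    finally show ?thesis using ln_2_less_1 by linarith
  qed
  have H6: "(1 - \<alpha>) * L - ll - H \<ge> 0"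
  proof -
    have "ll \<le> ln (2 * x)" unfolding ll_def using lx1 x2 l2 by (intro ln_mono) auto
    also have "\<dots> = ln 2 + \<gamma> * L" unfolding x_def L_def using npos by (simp add: ln_mult ln_powr)
    finally have "ll \<le> ln 2 + \<gamma> * L" .
    moreover have "(1 - \<alpha> - \<gamma>) * L \<ge> ln 2 + H" using E2 unfolding L_def .
    ultimately show ?thesis by (simp add: algebra_simps)
  qed
  define pil where "pil = real (card {p. prime p \<and> p \<le> l})"
  define piX where "piX = real (card {p. prime p \<and> p \<le> K * l})"
  have H7: "pil * (ll + H) \<le> 12 * real l"
  proof -
    have c: "pil \<le> 6 * real l / ll" unfolding pil_def ll_def using cheb_pi[OF l2] by simp
    have "pil * (ll + H) \<le> (6 * real l / ll) * (ll + H)"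
      using c llpos H0 by (intro mult_right_mono) auto
    also have "\<dots> \<le> (6 * real l / ll) * (2 * ll)" using llH llpos by (intro mult_left_mono) auto
    also have "\<dots> = 12 * real l" using llpos by (simp add: field_simps)
    finally show ?thesis .
  qed
  have H8: "piX * H \<le> real l"
  proof -
    have Kl2: "K * l \<ge> 2" using K1 l2 by (metis le_trans mult_le_mono1 mult_1)
    have c: "piX \<le> 6 * real (K * l) / ln (real (K * l))" unfolding piX_def using cheb_pi[OF Kl2] by simp
    have "ll \<le> ln (real (K * l))" unfolding ll_def using K1 l2 by (intro ln_mono) auto
    then have "6 * real (K * l) / ln (real (K * l)) \<le> 6 * real (K * l) / ll"
      using llpos by (intro divide_left_mono) auto
    then have c2: "piX \<le> 6 * real K * real l / ll" using c by simp
    have "piX * H \<le> (6 * real K * real l / ll) * H" using c2 H0 by (intro mult_right_mono) auto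
    also have "\<dots> = real l * (6 * real K * H) / ll" by (simp add: field_simps)
    also have "\<dots> \<le> real l * ll / ll" using ll6 llpos by (intro divide_right_mono mult_left_mono) auto
    also have "\<dots> = real l" using llpos by simp
    finally show ?thesis .
  qed
  define w where "w = real (n + l) powr \<alpha>"
  have H9: "w * L \<le> real l"
  proof -
    have "w \<le> (2 * real n) powr \<alpha>" unfolding w_def using ln_ a by (intro powr_mono2) auto
    also have "\<dots> = 2 powr \<alpha> * real n powr \<alpha>" using npos by (simp add: powr_mult)
    also have "2 powr \<alpha> \<le> 2 powr (1::real)" using a by (intro powr_mono) auto
    then have "2 powr \<alpha> * real n powr \<alpha> \<le> 2 * real n powr \<alpha>" by (intro mult_right_mono) auto
    finally have "w * L \<le> 2 * real n powr \<alpha> * L" using L0 by (intro mult_right_mono) auto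
    also have "\<dots> \<le> x" using E4 unfolding x_def L_def .
    finally show ?thesis using lx by linarith
  qed
  have H1': "real l \<le> pil + real g + real b" using M1 unfolding pil_def .
  have H2': "real g \<ge> \<delta> * (real l - w)" using M2 unfolding w_def .
  have H3': "real g * ((1 - \<alpha>) * L) + real b * ll + (real b - piX) * H \<le> real l * (ln (real (n + l)) - ll + 1)"
    using M3 unfolding piX_def L_def ll_def Hdef .
  have a1: "\<alpha> < 1" using a by simp
  have lpos: "real l > 0" using l2 by simp
  have w0: "w \<ge> 0" unfolding w_def by simp
  show False
    by (rule final_contra[OF d a(1) a1 gam H1' H2' H3' H4 H5 H6 H7 H8 H9 H10 lpos H0 less_imp_le[OF llpos] L0 w0])
qed


lemma ev_ln: "0 < c \<Longrightarrow> eventually (\<lambda>x::real. c * ln x \<ge> D) at_top"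
  by real_asymp

lemma ev_pow: "0 < g \<Longrightarrow> g < 1 - a \<Longrightarrow> eventually (\<lambda>x::real. x powr g + 1 < x powr (1 - a)) at_top"
  by real_asymp

lemma ev_lnpow: "0 < a \<Longrightarrow> a < g \<Longrightarrow> eventually (\<lambda>x::real. 2 * x powr a * ln x \<le> x powr g) at_top"
  by real_asymp

lemma ev_pow2: "0 < g \<Longrightarrow> eventually (\<lambda>x::real. x powr g \<ge> 2) at_top"
  by real_asymp

theorem theorem1p4:
  fixes \<alpha> \<delta> :: real
  assumes "0 < \<alpha>" and "\<alpha> < 1/2" and "\<delta> > 0"
    and "\<forall>\<^sub>F m in sequentially.
           (\<Sum>j = 1..nat \<lfloor>real m powr \<alpha>\<rfloor>.
              real (prime_pi ((real m + real m powr \<alpha>) / real j)) - real (prime_pi (real m / real j)))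
           \<ge> \<delta> * real m powr \<alpha>"
  shows "max \<alpha> ((1 - \<delta> * (1 - \<alpha>)) / (2 - \<delta>)) < 1/2 \<and>
         (\<forall>\<^sub>F n in sequentially. real (g1 n) < real n powr (max \<alpha> ((1 - \<delta> * (1 - \<alpha>)) / (2 - \<delta>))))"
proof -
  from assms(4) obtain M where hM: "\<forall>m\<ge>M. (\<Sum>j = 1..nat \<lfloor>real m powr \<alpha>\<rfloor>.
              real (prime_pi ((real m + real m powr \<alpha>) / real j)) - real (prime_pi (real m / real j)))
           \<ge> \<delta> * real m powr \<alpha>"
    unfolding eventually_sequentially by blast
  show ?thesis
  proof (cases "\<delta> \<ge> 1")
    case True
    from refute_big_delta[OF assms(1,2) True hM] show ?thesis by blast
  next
    case False
    then have d1: "\<delta> < 1" by simp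
    define \<gamma> where "\<gamma> = (1 - \<delta> * (1 - \<alpha>)) / (2 - \<delta>)"
    have d2: "2 - \<delta> > 0" using d1 by simp
    have gam: "(2 - \<delta>) * \<gamma> = 1 - \<delta> * (1 - \<alpha>)" using d2 by (simp add: \<gamma>_def)
    have p1: "(1 - \<delta>) * (1 - 2 * \<alpha>) > 0" using d1 assms(2) by (intro mult_pos_pos) auto
    have p2: "\<delta> * (1 - 2 * \<alpha>) > 0" using assms(3) assms(2) by (intro mult_pos_pos) auto
    have ga: "\<alpha> < \<gamma>"
    proof -
      have "\<alpha> * (2 - \<delta>) < 1 - \<delta> * (1 - \<alpha>)" using p1 by (simp add: algebra_simps)
      then show ?thesis unfolding \<gamma>_def using d2 by (simp add: pos_less_divide_eq)
    qed
    have gh: "\<gamma> < 1/2"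
    proof -
      have "1 - \<delta> * (1 - \<alpha>) < (1/2) * (2 - \<delta>)" using p2 by (simp add: algebra_simps)
      then show ?thesis unfolding \<gamma>_def using d2 by (simp add: pos_divide_less_eq)
    qed
    have mx: "max \<alpha> ((1 - \<delta> * (1 - \<alpha>)) / (2 - \<delta>)) = \<gamma>" using ga unfolding \<gamma>_def by simp
    define K where "K = nat \<lceil>exp (17 / (1 - \<delta>))\<rceil>"
    have Kge: "real K \<ge> exp (17 / (1 - \<delta>))" unfolding K_def by (rule real_nat_ceiling_ge)
    have K1: "K \<ge> 1"
    proof -
      have "exp (17 / (1 - \<delta>)) \<ge> 1" using d1 by simp
      then have "1 \<le> real K" using Kge by linarith
      then show ?thesis by simp
    qed
    define H where "H = ln (real K)"
    have HK: "H \<ge> 17 / (1 - \<delta>)"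
    proof -
      have "ln (exp (17 / (1 - \<delta>))) \<le> ln (real K)" using Kge by (intro ln_mono) auto
      then show ?thesis unfolding H_def by simp
    qed
    have H10: "(1 - \<delta>) * H > 16"
    proof -
      have "(1 - \<delta>) * H \<ge> (1 - \<delta>) * (17 / (1 - \<delta>))" using HK d1 by (intro mult_left_mono) auto
      moreover have "(1 - \<delta>) * (17 / (1 - \<delta>)) = 17" using d1 by (simp add: field_simps)
      ultimately show ?thesis by linarith
    qed
    have g0: "0 < \<gamma>" using ga assms(1) by simp
    have e1: "eventually (\<lambda>x::real. x powr \<gamma> + 1 < x powr (1 - \<alpha>)) at_top"
      using ev_pow[OF g0] ga gh by simp
    have e2: "eventually (\<lambda>x::real. (1 - \<alpha> - \<gamma>) * ln x \<ge> ln 2 + H) at_top"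
      using ga gh by (intro ev_ln) simp
    have e3: "eventually (\<lambda>x::real. \<gamma> * ln x \<ge> (6 * real K + 1) * H + 1) at_top"
      using g0 by (intro ev_ln) simp
    have e4: "eventually (\<lambda>x::real. 2 * x powr \<alpha> * ln x \<le> x powr \<gamma>) at_top"
      using ev_lnpow[OF assms(1) ga] .
    have e5: "eventually (\<lambda>x::real. x powr \<gamma> \<ge> 2) at_top" using ev_pow2[OF g0] .
    have e6: "eventually (\<lambda>x::real. x \<ge> real M + 2) at_top" by (rule eventually_ge_at_top)
    have ev: "eventually (\<lambda>x::real. (x powr \<gamma> + 1 < x powr (1 - \<alpha>)) \<and> ((1 - \<alpha> - \<gamma>) * ln x \<ge> ln 2 + H)
        \<and> (\<gamma> * ln x \<ge> (6 * real K + 1) * H + 1) \<and> (2 * x powr \<alpha> * ln x \<le> x powr \<gamma>)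
        \<and> (x powr \<gamma> \<ge> 2) \<and> (x \<ge> real M + 2)) at_top"
      using e1 e2 e3 e4 e5 e6 by eventually_elim blast
    have ev': "eventually (\<lambda>n. (real n powr \<gamma> + 1 < real n powr (1 - \<alpha>)) \<and> ((1 - \<alpha> - \<gamma>) * ln (real n) \<ge> ln 2 + H)
        \<and> (\<gamma> * ln (real n) \<ge> (6 * real K + 1) * H + 1) \<and> (2 * real n powr \<alpha> * ln (real n) \<le> real n powr \<gamma>)
        \<and> (real n powr \<gamma> \<ge> 2) \<and> (real n \<ge> real M + 2)) sequentially"
      by (rule eventually_compose_filterlim[OF ev filterlim_real_sequentially])
    have "eventually (\<lambda>n. real (g1 n) < real n powr \<gamma>) sequentially"
      using ev'
    proof eventually_elim
      case (elim n)
      then show ?case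
        by (intro per_n[OF assms(1,2,3) d1 gam ga gh hM K1 H_def H10]) (use elim in blast)+
    qed
    then show ?thesis using gh mx by simp
  qed
qed

end
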